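(* Let $\delta>0$, $L \in \mathbb N$, $A \subset \Lambda_n$, $x,y \in A$ with $\bar y = \bar x + L$, and let $\gamma$ be a self-avoiding nearest-neighbour walk in $A$ from $x$ to $y$. Assume $|\gamma| < (1+\delta) L$. Then $\gamma$ has at least $(1 - 3\delta) L$ pre-regeneration points.
   Context: $\Lambda_n=([0,n]\times(-n/2,n/2]^{d-1})\cap\mathbb Z^d$ with nearest-neighbour edges and periodic boundary conditions in the last $d-1$ coordinates; points $x=(\bar x,\hat x)$. A self-avoiding walk is identified with its set of vertices $\gamma$, totally ordered by order of visit; $|\gamma|$ is its number of vertices. For $w\in\Lambda_n$, $\mathcal C_w=\{u\in\Lambda_n:\bar u-\bar w\ge|\hat u-\hat w|\}\cup\{u\in\Lambda_n:\bar u\ge\bar w+\log n\}$ (with $|\hat u-\hat w|$ the transverse distance). A point $w\in\gamma$ is a pre-regeneration point of $\gamma$ if $u\in\mathcal C_w$ for all $u\in\gamma$ with $u\ge w$, and $\bar u<\bar w$ for all $u\in\gamma$ with $u<w$. *)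

theory Defs
  imports Complex_Main
begin

text \<open>A point x = (xbar, xhat) of Z^d: first coordinate xbar, transverse coordinates
  xhat 0, ..., xhat (d-2) (and xhat i = 0 for i >= d-1).\<close>
type_synonym point = "int \<times> (nat \<Rightarrow> int)"

definition Lambda :: "nat \<Rightarrow> nat \<Rightarrow> point set" where
  "Lambda d n = {(a, v). 0 \<le> a \<and> a \<le> int n \<and>
      (\<forall>i < d - 1. - int n < 2 * v i \<and> 2 * v i \<le> int n) \<and>
      (\<forall>i \<ge> d - 1. v i = 0)}"

definition adj :: "nat \<Rightarrow> nat \<Rightarrow> point \<Rightarrow> point \<Rightarrow> bool" where
  "adj d n u v \<longleftrightarrow> u \<in> Lambda d n \<and> v \<in> Lambda d n \<and> u \<noteq> v \<and>
     ((\<bar>fst u - fst v\<bar> = 1 \<and> snd u = snd v) \<or>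
      (fst u = fst v \<and> (\<exists>i < d - 1.
          ((snd u i - snd v i - 1) mod int n = 0 \<or> (snd u i - snd v i + 1) mod int n = 0) \<and>
          (\<forall>j. j \<noteq> i \<longrightarrow> snd u j = snd v j))))"

definition cdist :: "nat \<Rightarrow> int \<Rightarrow> int \<Rightarrow> int" where
  "cdist n a b = min ((a - b) mod int n) ((b - a) mod int n)"

definition tdist :: "nat \<Rightarrow> nat \<Rightarrow> point \<Rightarrow> point \<Rightarrow> int" where
  "tdist d n u w = (\<Sum>i<d - 1. cdist n (snd u i) (snd w i))"

definition cone :: "nat \<Rightarrow> nat \<Rightarrow> point \<Rightarrow> point set" where
  "cone d n w = {u \<in> Lambda d n. fst u - fst w \<ge> tdist d n u w} \<union>
                {u \<in> Lambda d n. real_of_int (fst u) \<ge> real_of_int (fst w) + ln (real n)}"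

definition saw_in :: "nat \<Rightarrow> nat \<Rightarrow> point set \<Rightarrow> point \<Rightarrow> point \<Rightarrow> point list \<Rightarrow> bool" where
  "saw_in d n A x y \<gamma> \<longleftrightarrow> \<gamma> \<noteq> [] \<and> distinct \<gamma> \<and> set \<gamma> \<subseteq> A \<and>
     hd \<gamma> = x \<and> last \<gamma> = y \<and>
     (\<forall>k. Suc k < length \<gamma> \<longrightarrow> adj d n (\<gamma> ! k) (\<gamma> ! Suc k))"

definition prereg :: "nat \<Rightarrow> nat \<Rightarrow> point list \<Rightarrow> nat \<Rightarrow> bool" where
  "prereg d n \<gamma> k \<longleftrightarrow> k < length \<gamma> \<and>
     (\<forall>j. k \<le> j \<and> j < length \<gamma> \<longrightarrow> \<gamma> ! j \<in> cone d n (\<gamma> ! k)) \<and>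
     (\<forall>j < k. fst (\<gamma> ! j) < fst (\<gamma> ! k))"

definition num_prereg :: "nat \<Rightarrow> nat \<Rightarrow> point list \<Rightarrow> nat" where
  "num_prereg d n \<gamma> = card {k. prereg d n \<gamma> k}"

end

theory Submission imports Defs begin

definition Gs :: "(nat \<Rightarrow> int) \<Rightarrow> nat \<Rightarrow> nat set" where
  "Gs p N = {k. k \<le> N \<and> (\<forall>j<k. p j < p k) \<and> (\<forall>j. k \<le> j \<and> j \<le> N \<longrightarrow> p k \<le> p j)}"

definition Ds :: "(nat \<Rightarrow> int) \<Rightarrow> nat \<Rightarrow> int" where
  "Ds p N = (\<Sum>s<N. if p (Suc s) < p s then 1 else 0)"

lemma walk_count:
  fixes p :: "nat \<Rightarrow> int"
  assumes "\<forall>s<N. p (Suc s) = p s + 1 \<or> p (Suc s) = p s - 1"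
  shows "int (card (Gs p N)) \<ge> Max (p ` {..N}) - p 0 - Ds p N \<and> p N - p 0 = int N - 2 * Ds p N"
  using assms
proof (induction N)
  case 0
  have "Gs p 0 = {0}" unfolding Gs_def by auto
  then show ?case by (simp add: Ds_def)
next
  case (Suc N)
  define G where "G = Gs p N"
  define M where "M = Max (p ` {..N})"
  define b where "b = p (Suc N)"
  have IH: "int (card G) \<ge> M - p 0 - Ds p N" "p N - p 0 = int N - 2 * Ds p N"
    using Suc by (auto simp: G_def M_def)
  have GS: "Gs p (Suc N) = {k\<in>G. p k \<le> b} \<union> (if (\<forall>j<Suc N. p j < b) then {Suc N} else {})"
    unfolding G_def Gs_def b_def by (auto simp: le_Suc_eq)
  have MS: "Max (p ` {..Suc N}) = max M b"
    unfolding M_def b_def by (simp add: atMost_Suc max.commute)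
  have fin: "finite G" unfolding G_def Gs_def by (rule finite_subset[of _ "{..N}"]) auto
  have pk_le: "\<forall>k\<in>G. p k \<le> p N" unfolding G_def Gs_def by auto
  have pjM: "\<forall>j\<le>N. p j \<le> M" unfolding M_def by auto
  have SucG: "Suc N \<notin> G" unfolding G_def Gs_def by auto
  have DsS: "Ds p (Suc N) = Ds p N + (if b < p N then 1 else 0)"
    unfolding Ds_def b_def by simp
  have "b = p N + 1 \<or> b = p N - 1" using Suc.prems b_def by auto
  then show ?case
  proof
    assume up: "b = p N + 1"
    have G1: "{k\<in>G. p k \<le> b} = G" using pk_le up by auto
    show ?thesis
    proof (cases "p N = M")
      case True
      have "\<forall>j<Suc N. p j < b" using pjM True up by auto
      then have "Gs p (Suc N) = insert (Suc N) G" using GS G1 by auto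
      then have "card (Gs p (Suc N)) = card G + 1" using fin SucG by simp
      then show ?thesis using IH MS DsS up True by (simp add: b_def max_def)
    next
      case False
      have "p N \<le> M" using pjM by auto
      then have "max M b = M" using False up by auto
      have "G \<subseteq> Gs p (Suc N)" using GS G1 by auto
      moreover have "finite (Gs p (Suc N))" unfolding Gs_def
        by (rule finite_subset[of _ "{..Suc N}"]) auto
      ultimately have "card G \<le> card (Gs p (Suc N))" by (rule card_mono[rotated])
      then show ?thesis using IH MS DsS up \<open>max M b = M\<close> by (simp add: b_def)
    qed
  next
    assume dn: "b = p N - 1"
    have "p N \<le> M" using pjM by auto
    then have mx: "max M b = M" using dn by auto
    define S where "S = {k\<in>G. p k = p N}"
    have "G - S \<subseteq> Gs p (Suc N)" using GS pk_le dn unfolding S_def by auto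
    moreover have "finite (Gs p (Suc N))" unfolding Gs_def
      by (rule finite_subset[of _ "{..Suc N}"]) auto
    ultimately have c1: "card (G - S) \<le> card (Gs p (Suc N))" by (rule card_mono[rotated])
    have finS: "finite S" using fin S_def by auto
    have "card S \<le> Suc 0"
    proof (subst card_le_Suc0_iff_eq[OF finS], intro ballI)
      fix a1 a2 assume a: "a1 \<in> S" "a2 \<in> S"
      show "a1 = a2"
      proof (rule ccontr)
        assume "a1 \<noteq> a2"
        then have "a1 < a2 \<or> a2 < a1" by auto
        then show False using a unfolding S_def G_def Gs_def by force
      qed
    qed
    have "card G - card S \<le> card (G - S)" by (rule diff_card_le_card_Diff) (simp add: finS)
    then have "int (card G) - 1 \<le> int (card (Gs p (Suc N)))" using c1 \<open>card S \<le> Suc 0\<close> by linarith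
    then show ?thesis using IH MS DsS dn mx by (simp add: b_def)
  qed
qed

lemma cdist_self: "cdist n a a = 0" by (simp add: cdist_def)

lemma min4: fixes X Y p q r s :: int
  shows "X \<le> p + r \<Longrightarrow> Y \<le> q + s \<Longrightarrow> min X Y \<le> p + s \<Longrightarrow> min X Y \<le> q + r \<Longrightarrow> min X Y \<le> min p q + min r s"
  unfolding min_def by (auto split: if_splits)

lemma cdist_tri:
  assumes "n \<ge> 1"
  shows "cdist n a' c \<le> cdist n a c + cdist n a' a"
proof -
  define x where "x = a - c"
  define y where "y = a' - a"
  have np: "int n > 0" using assms by simp
  have e1: "a' - c = x + y" "c - a' = - x + - y" "c - a = - x" "a - a' = - y"
    unfolding x_def y_def by auto
  have key: "\<And>u v. min ((u+v) mod int n) ((- u + - v) mod int n) \<le> min (u mod int n) ((- u) mod int n) + min (v mod int n) ((- v) mod int n)"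
  proof -
    fix u v :: int
    have A: "\<And>u v. (u + v) mod int n \<le> u mod int n + v mod int n"
    proof -
      fix u v :: int
      have "(u + v) mod int n = (u mod int n + v mod int n) mod int n" by (rule mod_add_eq[symmetric])
      also have "\<dots> \<le> u mod int n + v mod int n"
        proof (rule zmod_le_nonneg_dividend)
          have "0 \<le> u mod int n" "0 \<le> v mod int n" using np by simp_all
          then show "0 \<le> u mod int n + v mod int n" by simp
        qed
      finally show "(u + v) mod int n \<le> u mod int n + v mod int n" .
    qed
    have B: "\<And>u v. min ((u+v) mod int n) ((- u + - v) mod int n) \<le> u mod int n + (- v) mod int n"
    proof -
      fix u v :: int
      define P where "P = u mod int n"
      define Q where "Q = (- v) mod int n"
      have P0: "0 \<le> P" "P < int n" unfolding P_def using np by auto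
      have Q0: "0 \<le> Q" "Q < int n" unfolding Q_def using np by auto
      have c1: "(u+v) mod int n = (P - Q) mod int n" unfolding P_def Q_def
        by (metis diff_minus_eq_add mod_diff_eq)
      have c2: "(- u + - v) mod int n = (Q - P) mod int n" unfolding P_def Q_def
        by (metis add.commute diff_conv_add_uminus mod_diff_eq)
      show "min ((u+v) mod int n) ((- u + - v) mod int n) \<le> u mod int n + (- v) mod int n"
      proof (cases "P \<ge> Q")
        case True
        then have "(P - Q) mod int n = P - Q" using P0 Q0 by (simp add: mod_pos_pos_trivial)
        then show ?thesis using c1 Q0 P_def Q_def by linarith
      next
        case False
        then have "(Q - P) mod int n = Q - P" using P0 Q0 by (simp add: mod_pos_pos_trivial)
        then show ?thesis using c2 P0 P_def Q_def by linarith
      qed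
    qed
    have B2: "min ((u+v) mod int n) ((- u + - v) mod int n) \<le> (- u) mod int n + v mod int n"
      using B[of v u] by (simp only: add.commute min.commute)
    have A2: "(- u + - v) mod int n \<le> (- u) mod int n + (- v) mod int n" by (rule A)
    show "min ((u+v) mod int n) ((- u + - v) mod int n) \<le> min (u mod int n) ((- u) mod int n) + min (v mod int n) ((- v) mod int n)"
      using min4[OF A[of u v] A2 B[of u v] B2] by simp
  qed
  have "cdist n a' c = min ((x+y) mod int n) ((- x + - y) mod int n)" unfolding cdist_def e1 ..
  moreover have "cdist n a c = min (x mod int n) ((- x) mod int n)" unfolding cdist_def x_def by simp
  moreover have "cdist n a' a = min (y mod int n) ((- y) mod int n)" unfolding cdist_def y_def by simp
  ultimately show ?thesis using key[of x y] by simp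
qed

lemma cdist_step:
  assumes "n \<ge> 1" "(a - b - 1) mod int n = 0 \<or> (a - b + 1) mod int n = 0"
  shows "cdist n b a \<le> 1"
proof -
  have np: "int n \<ge> 1" using assms by simp
  have m1: "1 mod int n \<le> 1" using np by (simp add: zmod_le_nonneg_dividend)
  from assms(2) show ?thesis
  proof
    assume "(a - b - 1) mod int n = 0"
    have "(a - b) mod int n = ((a - b - 1) mod int n + 1) mod int n" by (simp add: mod_add_left_eq)
    then have "(a - b) mod int n = 1 mod int n" using \<open>(a - b - 1) mod int n = 0\<close> by simp
    then show ?thesis unfolding cdist_def using m1 by simp
  next
    assume "(a - b + 1) mod int n = 0"
    have z: "(- (a - b + 1)) mod int n = 0"
      using mod_minus_eq[of "a - b + 1" "int n"] \<open>(a - b + 1) mod int n = 0\<close> by simp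
    have "(b - a) mod int n = ((- (a - b + 1)) + 1) mod int n" by simp
    also have "\<dots> = ((- (a - b + 1)) mod int n + 1) mod int n" by (simp only: mod_add_left_eq)
    finally have "(b - a) mod int n = 1 mod int n" using z by simp
    then show ?thesis unfolding cdist_def using m1 by simp
  qed
qed

lemma tdist_self: "tdist d n u u = 0" by (simp add: tdist_def cdist_def)

lemma adj_cases:
  assumes "adj d n u v"
  shows "(fst u \<noteq> fst v \<and> \<bar>fst u - fst v\<bar> = 1 \<and> snd u = snd v) \<or>
         (fst u = fst v \<and> (\<exists>i < d - 1.
          ((snd u i - snd v i - 1) mod int n = 0 \<or> (snd u i - snd v i + 1) mod int n = 0) \<and>
          (\<forall>j. j \<noteq> i \<longrightarrow> snd u j = snd v j)))"
  using assms unfolding adj_def by auto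

lemma tdist_step:
  assumes "n \<ge> 1" "adj d n u v"
  shows "tdist d n v w \<le> tdist d n u w + (if fst u = fst v then 1 else 0)"
proof (cases "fst u = fst v")
  case False
  then have "snd u = snd v" using adj_cases[OF assms(2)] by auto
  then show ?thesis using False unfolding tdist_def by simp
next
  case True
  then obtain i where i: "i < d - 1"
    "(snd u i - snd v i - 1) mod int n = 0 \<or> (snd u i - snd v i + 1) mod int n = 0"
    "\<forall>j. j \<noteq> i \<longrightarrow> snd u j = snd v j"
    using adj_cases[OF assms(2)] by auto
  have "\<And>j. cdist n (snd v j) (snd w j) \<le> cdist n (snd u j) (snd w j) + (if j = i then 1 else 0)"
  proof -
    fix j
    show "cdist n (snd v j) (snd w j) \<le> cdist n (snd u j) (snd w j) + (if j = i then 1 else 0)"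
    proof (cases "j = i")
      case True
      have "cdist n (snd v i) (snd w i) \<le> cdist n (snd u i) (snd w i) + cdist n (snd v i) (snd u i)"
        by (rule cdist_tri[OF assms(1)])
      moreover have "cdist n (snd v i) (snd u i) \<le> 1" by (rule cdist_step[OF assms(1) i(2)])
      ultimately show ?thesis using True by simp
    next
      case False
      then show ?thesis using i(3) by simp
    qed
  qed
  then have "tdist d n v w \<le> (\<Sum>j<d - 1. cdist n (snd u j) (snd w j) + (if j = i then 1 else 0))"
    unfolding tdist_def by (rule sum_mono)
  also have "\<dots> = tdist d n u w + 1" unfolding tdist_def sum.distrib using i(1) by simp
  finally show ?thesis using True by simp
qed

theorem lemma5p4:
  fixes d n L :: nat and \<delta> :: real and A :: "point set" and x y :: point
    and \<gamma> :: "point list"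
  assumes "d \<ge> 2" and "n \<ge> 1"
    and "\<delta> > 0"
    and "A \<subseteq> Lambda d n" and "x \<in> A" and "y \<in> A"
    and "fst y = fst x + int L"
    and "saw_in d n A x y \<gamma>"
    and "real (length \<gamma>) < (1 + \<delta>) * real L"
  shows "real (num_prereg d n \<gamma>) \<ge> (1 - 3 * \<delta>) * real L"
proof -
  define m where "m = length \<gamma>"
  define N where "N = m - 1"
  have ne: "\<gamma> \<noteq> []" and sub: "set \<gamma> \<subseteq> A" and hd: "hd \<gamma> = x" and lst: "last \<gamma> = y"
    and adjs: "\<forall>k. Suc k < length \<gamma> \<longrightarrow> adj d n (\<gamma> ! k) (\<gamma> ! Suc k)"
    using assms(8) unfolding saw_in_def by auto
  have mpos: "m \<ge> 1" using ne m_def by (cases \<gamma>) auto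
  have mN: "m = Suc N" using mpos N_def by simp
  have x0: "\<gamma> ! 0 = x" using hd ne by (simp add: hd_conv_nth)
  have yN: "\<gamma> ! N = y" using lst ne by (simp add: last_conv_nth N_def m_def)
  define h where "h j = fst (\<gamma> ! j)" for j
  define tr where "tr s = (fst (\<gamma> ! s) = fst (\<gamma> ! Suc s))" for s
  define tau where "tau j = (\<Sum>s<j. if tr s then 1 else 0 :: int)" for j
  define psi where "psi j = h j - tau j" for j
  have tauS: "tau (Suc j) = tau j + (if tr j then 1 else 0)" for j unfolding tau_def by simp
  have tau0: "tau 0 = 0" unfolding tau_def by simp
  have taumono: "tau j \<le> tau k" if "j \<le> k" for j k
    unfolding tau_def by (rule sum_mono2) (use that in auto)
  have stepc: "(\<not> tr s \<and> \<bar>h (Suc s) - h s\<bar> = 1) \<or> (tr s \<and> h (Suc s) = h s)" if "s < N" for s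
  proof -
    have "adj d n (\<gamma> ! s) (\<gamma> ! Suc s)" using adjs that mN m_def by auto
    from adj_cases[OF this] show ?thesis unfolding tr_def h_def by auto
  qed
  have psistep: "\<forall>s<N. psi (Suc s) = psi s + 1 \<or> psi (Suc s) = psi s - 1"
  proof (intro allI impI)
    fix s assume "s < N"
    from stepc[OF this] show "psi (Suc s) = psi s + 1 \<or> psi (Suc s) = psi s - 1"
      unfolding psi_def tauS by auto
  qed
  have theta: "h j + tau j - h 0 \<le> int j" if "j \<le> N" for j
    using that
  proof (induction j)
    case 0
    then show ?case using tau0 by simp
  next
    case (Suc j)
    then have "j < N" by simp
    from stepc[OF this] Suc.IH \<open>j < N\<close> show ?case unfolding tauS by auto
  qed
  have tdb: "tdist d n (\<gamma> ! j) (\<gamma> ! k) \<le> tau j - tau k" if "k \<le> j" "j \<le> N" for j k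
    using that
  proof (induction j)
    case 0
    then show ?case using tdist_self by simp
  next
    case (Suc j)
    show ?case
    proof (cases "k = Suc j")
      case True
      then show ?thesis using tdist_self by simp
    next
      case False
      then have kj: "k \<le> j" "j < N" using Suc.prems by auto
      have "adj d n (\<gamma> ! j) (\<gamma> ! Suc j)" using adjs kj mN m_def by auto
      from tdist_step[OF assms(2) this, of "\<gamma> ! k"] Suc.IH kj
      show ?thesis unfolding tauS tr_def by auto
    qed
  qed
  have Lam: "\<gamma> ! j \<in> Lambda d n" if "j < m" for j
    using that sub assms(4) m_def nth_mem by blast
  have Gsub: "Gs psi N \<subseteq> {k. prereg d n \<gamma> k}"
  proof
    fix k assume k: "k \<in> Gs psi N"
    then have kN: "k \<le> N" and pre: "\<forall>j<k. psi j < psi k"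
      and suf: "\<forall>j. k \<le> j \<and> j \<le> N \<longrightarrow> psi k \<le> psi j" unfolding Gs_def by auto
    have "k < length \<gamma>" using kN mN m_def by simp
    moreover have "\<forall>j. k \<le> j \<and> j < length \<gamma> \<longrightarrow> \<gamma> ! j \<in> cone d n (\<gamma> ! k)"
    proof (intro allI impI)
      fix j assume j: "k \<le> j \<and> j < length \<gamma>"
      then have jN: "j \<le> N" using mN m_def by simp
      have "psi k \<le> psi j" using suf j jN by auto
      then have "tau j - tau k \<le> h j - h k" unfolding psi_def by simp
      then have "tdist d n (\<gamma> ! j) (\<gamma> ! k) \<le> fst (\<gamma> ! j) - fst (\<gamma> ! k)"
        using tdb[of k j] j jN unfolding h_def by simp
      then show "\<gamma> ! j \<in> cone d n (\<gamma> ! k)" unfolding cone_def using Lam[of j] j m_def by auto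
    qed
    moreover have "\<forall>j<k. fst (\<gamma> ! j) < fst (\<gamma> ! k)"
    proof (intro allI impI)
      fix j assume "j < k"
      then have "psi j < psi k" "tau j \<le> tau k" using pre taumono by auto
      then show "fst (\<gamma> ! j) < fst (\<gamma> ! k)" unfolding psi_def h_def by simp
    qed
    ultimately show "k \<in> {k. prereg d n \<gamma> k}" unfolding prereg_def by simp
  qed
  have finP: "finite {k. prereg d n \<gamma> k}"
    by (rule finite_subset[of _ "{..<length \<gamma>}"]) (auto simp: prereg_def)
  have cardle: "card (Gs psi N) \<le> num_prereg d n \<gamma>"
    unfolding num_prereg_def by (rule card_mono[OF finP Gsub])
  from walk_count[OF psistep]
  have wc: "Max (psi ` {..N}) - psi 0 - Ds psi N \<le> int (card (Gs psi N))"
    "psi N - psi 0 = int N - 2 * Ds psi N" by auto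
  have "psi N \<le> Max (psi ` {..N})" by (rule Max_ge) auto
  then have c1: "psi N - psi 0 - Ds psi N \<le> int (num_prereg d n \<gamma>)" using wc cardle by linarith
  have hN: "h N = fst x + int L" "h 0 = fst x" using x0 yN assms(7) unfolding h_def by auto
  have "tau N \<le> int N - int L" using theta[of N] hN by simp
  then have "int (num_prereg d n \<gamma>) \<ge> 3 * int L - 2 * int N"
    using c1 wc(2) hN tau0 unfolding psi_def by linarith
  then have "real_of_int (int (num_prereg d n \<gamma>)) \<ge> real_of_int (3 * int L - 2 * int N)"
    by (simp only: of_int_le_iff)
  then have r1: "real (num_prereg d n \<gamma>) \<ge> 3 * real L - 2 * real N" by simp
  have r2: "real m = real N + 1" using mN by simp
  have "\<delta> * real L \<ge> 0" using assms(3) by simp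
  then show ?thesis using r1 r2 assms(9) m_def by (simp add: algebra_simps) 
qed

end
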